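(* Let $Y$ be a sofic shift and $(G,\mathcal L)$ the follower set graph of $Y$. Then the future cover $(\mathbb K(Y),L_{\mathbb K(Y)})$ of $Y$ is isomorphic, as a labeled graph, to $(G_{reg},\mathcal L)$.
   Context: Let $Y\subseteq A^{\mathbb Z}$ be a sofic shift, $Y[0,\infty)=\{y_{[0,\infty)}:y\in Y\}$, $\mathbb W(Y)$ its set of words. For a word $w$ let $F(w)=\{z\in Y[0,\infty): wz\in Y[0,\infty)\}$, and for $y\in Y$ let $F(y)=\{z\in Y[0,\infty): y_{(-\infty,-1]}z\in Y\}$. The follower set graph $(G,\mathcal L)$ (as in Lind–Marcus) has as vertices the distinct sets $F(w)$, $w$ a word of $Y$, and an edge labeled $a$ from $F(w)$ to $F(wa)$ whenever $wa\in\mathbb W(Y)$ (one edge per vertex pair and label). For a labeled graph $(H,L_H)$ with edge shift $X_H$, follower set of a vertex: $f_H(v)=\{L_H(x): x$ a right-infinite path starting at $v\}$. A vertex $v$ is regular if there is a bi-infinite path $z\in X_H$ such that the edge $z_{-1}$ ends at $v$ and $f_H(v)=F(L_H(z))$. For right-resolving $(H,L_H)$ (distinct edges with common source have distinct labels), $(H_{reg},L_H)$ is the labeled subgraph whose vertices are the regular vertices and whose edges are the edges with source a regular vertex. The future cover $(\mathbb K(Y),L_{\mathbb K(Y)})$ is the labeled graph with vertices the distinct sets $F(y)$, $y\in Y$, and an edge labeled $a\in A$ from $F(y)$ to $F(z)$ exactly when $F(z)=\{w\in A^{\mathbb N}: aw\in F(y)\}$ (one edge per such pair and label). *)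

theory Defs
  imports Main
begin

(* A labeled graph is a vertex set V :: 'v set together with an
   edge set E :: ('v * 'a * 'v) set of triples (source, label, target); there is
   at most one edge per vertex pair and label. *)

definition right_part :: "(int \<Rightarrow> 'a) \<Rightarrow> nat \<Rightarrow> 'a" where
  "right_part y = (\<lambda>n. y (int n))"

definition Yplus :: "(int \<Rightarrow> 'a) set \<Rightarrow> (nat \<Rightarrow> 'a) set" where
  "Yplus Y = right_part ` Y"

definition occurs :: "'a list \<Rightarrow> (int \<Rightarrow> 'a) \<Rightarrow> bool" where
  "occurs w y \<longleftrightarrow> (\<exists>i::int. \<forall>k<length w. y (i + int k) = w ! k)"

definition words :: "(int \<Rightarrow> 'a) set \<Rightarrow> 'a list set" where
  "words Y = {w. \<exists>y\<in>Y. occurs w y}"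

definition cat :: "'a list \<Rightarrow> (nat \<Rightarrow> 'a) \<Rightarrow> nat \<Rightarrow> 'a" where
  "cat w z n = (if n < length w then w ! n else z (n - length w))"

definition Fw :: "(int \<Rightarrow> 'a) set \<Rightarrow> 'a list \<Rightarrow> (nat \<Rightarrow> 'a) set" where
  "Fw Y w = {z \<in> Yplus Y. cat w z \<in> Yplus Y}"

definition glue :: "(int \<Rightarrow> 'a) \<Rightarrow> (nat \<Rightarrow> 'a) \<Rightarrow> int \<Rightarrow> 'a" where
  "glue y z i = (if i < 0 then y i else z (nat i))"

definition Fy :: "(int \<Rightarrow> 'a) set \<Rightarrow> (int \<Rightarrow> 'a) \<Rightarrow> (nat \<Rightarrow> 'a) set" where
  "Fy Y y = {z \<in> Yplus Y. glue y z \<in> Y}"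

definition edge_shift :: "('v \<times> 'a \<times> 'v) set \<Rightarrow> (int \<Rightarrow> 'v \<times> 'a \<times> 'v) set" where
  "edge_shift E = {z. \<forall>i. z i \<in> E \<and> snd (snd (z i)) = fst (z (i + 1))}"

definition label_seq :: "(int \<Rightarrow> 'v \<times> 'a \<times> 'v) \<Rightarrow> int \<Rightarrow> 'a" where
  "label_seq z = (\<lambda>i. fst (snd (z i)))"

(* sofic shift: the set of label sequences of bi-infinite paths of a finite labeled graph
   (Lind--Marcus); vertices are taken to be natural numbers w.l.o.g. *)
definition sofic :: "(int \<Rightarrow> 'a) set \<Rightarrow> bool" where
  "sofic Y \<longleftrightarrow> (\<exists>E :: (nat \<times> 'a \<times> nat) set. finite E \<and> Y = label_seq ` edge_shift E)"

definition rpath :: "('v \<times> 'a \<times> 'v) set \<Rightarrow> (nat \<Rightarrow> 'v \<times> 'a \<times> 'v) \<Rightarrow> bool" where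
  "rpath E p \<longleftrightarrow> (\<forall>n. p n \<in> E \<and> snd (snd (p n)) = fst (p (Suc n)))"

definition fH :: "('v \<times> 'a \<times> 'v) set \<Rightarrow> 'v \<Rightarrow> (nat \<Rightarrow> 'a) set" where
  "fH E v = {(\<lambda>n. fst (snd (p n))) | p. rpath E p \<and> fst (p 0) = v}"

definition regular :: "(int \<Rightarrow> 'a) set \<Rightarrow> 'v set \<Rightarrow> ('v \<times> 'a \<times> 'v) set \<Rightarrow> 'v \<Rightarrow> bool" where
  "regular Y V E v \<longleftrightarrow> v \<in> V \<and>
     (\<exists>z \<in> edge_shift E. snd (snd (z (-1))) = v \<and> fH E v = Fy Y (label_seq z))"

definition reg_vertices :: "(int \<Rightarrow> 'a) set \<Rightarrow> 'v set \<Rightarrow> ('v \<times> 'a \<times> 'v) set \<Rightarrow> 'v set" where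
  "reg_vertices Y V E = {v. regular Y V E v}"

definition reg_edges :: "(int \<Rightarrow> 'a) set \<Rightarrow> 'v set \<Rightarrow> ('v \<times> 'a \<times> 'v) set \<Rightarrow> ('v \<times> 'a \<times> 'v) set" where
  "reg_edges Y V E = {e \<in> E. fst e \<in> reg_vertices Y V E}"

definition fsg_vertices :: "(int \<Rightarrow> 'a) set \<Rightarrow> (nat \<Rightarrow> 'a) set set" where
  "fsg_vertices Y = Fw Y ` words Y"

definition fsg_edges :: "(int \<Rightarrow> 'a) set \<Rightarrow> ((nat \<Rightarrow> 'a) set \<times> 'a \<times> (nat \<Rightarrow> 'a) set) set" where
  "fsg_edges Y = {(Fw Y w, a, Fw Y (w @ [a])) | w a. w @ [a] \<in> words Y}"

definition fc_vertices :: "(int \<Rightarrow> 'a) set \<Rightarrow> (nat \<Rightarrow> 'a) set set" where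
  "fc_vertices Y = Fy Y ` Y"

definition fc_edges :: "(int \<Rightarrow> 'a) set \<Rightarrow> ((nat \<Rightarrow> 'a) set \<times> 'a \<times> (nat \<Rightarrow> 'a) set) set" where
  "fc_edges Y = {(Fy Y y, a, Fy Y z) | y z a. y \<in> Y \<and> z \<in> Y \<and>
                    Fy Y z = {w. cat [a] w \<in> Fy Y y}}"

definition lg_iso :: "'v set \<Rightarrow> ('v \<times> 'a \<times> 'v) set \<Rightarrow> 'w set \<Rightarrow> ('w \<times> 'a \<times> 'w) set \<Rightarrow> bool" where
  "lg_iso V1 E1 V2 E2 \<longleftrightarrow>
     E1 \<subseteq> V1 \<times> UNIV \<times> V1 \<and> E2 \<subseteq> V2 \<times> UNIV \<times> V2 \<and>
     (\<exists>\<phi>. bij_betw \<phi> V1 V2 \<and> bij_betw (\<lambda>(u, a, v). (\<phi> u, a, \<phi> v)) E1 E2)"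

end

theory Submission
  imports Defs "HOL-Library.FuncSet"
begin


lemma konig:
  fixes E :: "('v \<times> 'a \<times> 'v) set" and x :: "int \<Rightarrow> 'a" and D :: "int set"
  assumes finE: "finite E"
  and H: "\<And>n::nat. \<exists>p\<in>edge_shift E. \<forall>i\<in>D. \<bar>i\<bar> \<le> int n \<longrightarrow> label_seq p i = x i"
  shows "\<exists>p\<in>edge_shift E. \<forall>i\<in>D. label_seq p i = x i"
proof -
  from H obtain ps where ps: "\<And>n. ps n \<in> edge_shift E"
    "\<And>n i. i \<in> D \<Longrightarrow> \<bar>i\<bar> \<le> int n \<Longrightarrow> label_seq (ps n) i = x i"
    by metis
  define R where "R = (\<lambda>(m::nat) (f::int \<Rightarrow> 'v \<times> 'a \<times> 'v). restrict f {-int m..int m})"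
  define good where "good = (\<lambda>m q. infinite {n. m \<le> n \<and> R m (ps n) = q})"
  have finR: "finite (R m ` (ps ` A))" for m A
  proof (rule finite_subset)
    show "R m ` (ps ` A) \<subseteq> PiE {-int m..int m} (\<lambda>_. E)"
      using ps(1) by (auto simp: R_def edge_shift_def)
    show "finite (PiE {-int m..int m} (\<lambda>_. E))"
      by (rule finite_PiE) (auto simp: finE)
  qed
  have RR: "m \<le> m' \<Longrightarrow> R m (R m' f) = R m f" for m m' f
    by (auto simp: R_def restrict_def fun_eq_iff)
  have L1: "\<exists>q. good 0 q"
  proof -
    have "finite ((\<lambda>n. R 0 (ps n)) ` UNIV)" using finR[of 0 UNIV]
      by (simp add: image_image)
    then obtain q where "infinite ((\<lambda>n. R 0 (ps n)) -` {q} \<inter> UNIV)"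
      using inf_img_fin_dom'[of "(\<lambda>n. R 0 (ps n))" UNIV] by auto
    then show ?thesis unfolding good_def by (auto simp: vimage_def)
  qed
  have L2: "\<exists>q'. good (Suc m) q' \<and> R m q' = q" if g: "good m q" for m q
  proof -
    define A where "A = {n. m \<le> n \<and> R m (ps n) = q} - {m}"
    have infA: "infinite A" using g unfolding good_def A_def by auto
    have "finite ((\<lambda>n. R (Suc m) (ps n)) ` A)" using finR[of "Suc m" A]
      by (simp add: image_image)
    then obtain q' where q': "infinite ((\<lambda>n. R (Suc m) (ps n)) -` {q'} \<inter> A)"
      using inf_img_fin_dom'[OF _ infA] by auto
    have sub: "(\<lambda>n. R (Suc m) (ps n)) -` {q'} \<inter> A \<subseteq> {n. Suc m \<le> n \<and> R (Suc m) (ps n) = q'}"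
      unfolding A_def by auto
    have gq': "good (Suc m) q'" unfolding good_def using q' sub finite_subset by blast
    from q' obtain n where n: "n \<in> (\<lambda>n. R (Suc m) (ps n)) -` {q'} \<inter> A"
      by (metis ex_in_conv finite.emptyI)
    then have "R m q' = q" using RR[of m "Suc m" "ps n"] unfolding A_def by auto
    with gq' show ?thesis by blast
  qed
  define qs where "qs = rec_nat (SOME q. good 0 q) (\<lambda>m qm. SOME q'. good (Suc m) q' \<and> R m q' = qm)"
  have qs0: "qs 0 = (SOME q. good 0 q)" and qsS: "qs (Suc m) = (SOME q'. good (Suc m) q' \<and> R m q' = qs m)" for m
    by (simp_all add: qs_def)
  have qgood: "good m (qs m) \<and> R m (qs (Suc m)) = qs m" for m
  proof (induction m)
    case 0
    have "good 0 (qs 0)" unfolding qs0 using L1 by (rule someI_ex)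
    have "good (Suc 0) (qs (Suc 0)) \<and> R 0 (qs (Suc 0)) = qs 0"
      unfolding qsS[of 0] by (rule someI_ex[OF L2[OF \<open>good 0 (qs 0)\<close>]])
    then show ?case using \<open>good 0 (qs 0)\<close> by simp
  next
    case (Suc m)
    then have g: "good (Suc m) (qs (Suc m))"
      using L2[of m "qs m"] qsS[of m] someI_ex[of "\<lambda>q'. good (Suc m) q' \<and> R m q' = qs m"] by metis
    have "good (Suc (Suc m)) (qs (Suc (Suc m))) \<and> R (Suc m) (qs (Suc (Suc m))) = qs (Suc m)"
      unfolding qsS[of "Suc m"] by (rule someI_ex[OF L2[OF g]])
    with g show ?case by simp
  qed
  have cons: "m \<le> m' \<Longrightarrow> R m (qs m') = qs m" for m m'
  proof (induction m' rule: dec_induct)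
    case base
    have "R m (qs m) = R m (R m (qs (Suc m)))" using qgood[of m] by simp
    also have "\<dots> = qs m" using qgood[of m] RR[of m m "qs (Suc m)"] by simp
    finally show ?case .
  next
    case (step k)
    have "R m (qs (Suc k)) = R m (R k (qs (Suc k)))" using RR[of m k] step by simp
    also have "\<dots> = qs m" using qgood[of k] step by simp
    finally show ?case .
  qed
  have ex: "\<exists>n\<ge>m. qs m = R m (ps n)" for m
  proof -
    from qgood[of m] have "infinite {n. m \<le> n \<and> R m (ps n) = qs m}" unfolding good_def by simp
    then obtain n where "n \<in> {n. m \<le> n \<and> R m (ps n) = qs m}" by (metis ex_in_conv finite.emptyI)
    then show ?thesis by auto
  qed
  define p where "p = (\<lambda>i. qs (nat \<bar>i\<bar> + 1) i)"
  have pq: "\<bar>i\<bar> \<le> int m \<Longrightarrow> p i = qs m i" for i m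
  proof -
    assume a: "\<bar>i\<bar> \<le> int m"
    define k where "k = max m (nat \<bar>i\<bar> + 1)"
    have "qs m i = R m (qs k) i" using cons[of m k] by (simp add: k_def)
    also have "\<dots> = qs k i" using a by (simp add: R_def abs_le_iff)
    also have "\<dots> = R (nat \<bar>i\<bar> + 1) (qs k) i" by (simp add: R_def restrict_def) arith
    also have "\<dots> = p i" using cons[of "nat \<bar>i\<bar> + 1" k] by (simp add: k_def p_def)
    finally show ?thesis by simp
  qed
  have pn: "\<exists>n. p i = ps n i \<and> p (i+1) = ps n (i+1) \<and> \<bar>i\<bar> \<le> int n" for i
  proof -
    define m where "m = nat \<bar>i\<bar> + 1"
    obtain n where n: "n \<ge> m" "qs m = R m (ps n)" using ex by blast
    have "p i = qs m i" "p (i+1) = qs m (i+1)" using pq[of i m] pq[of "i+1" m] by (auto simp: m_def)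
    moreover have "qs m i = ps n i" "qs m (i+1) = ps n (i+1)" using n(2) by (auto simp: R_def m_def abs_le_iff)
    ultimately show ?thesis using n(1) m_def by auto
  qed
  have "p \<in> edge_shift E"
    unfolding edge_shift_def
  proof (safe)
    fix i
    obtain n where "p i = ps n i \<and> p (i+1) = ps n (i+1)" using pn by blast
    then show "p i \<in> E" "snd (snd (p i)) = fst (p (i + 1))"
      using ps(1)[of n] by (auto simp: edge_shift_def)
  qed
  moreover have "\<forall>i\<in>D. label_seq p i = x i"
  proof
    fix i assume "i \<in> D"
    obtain n where "p i = ps n i" "\<bar>i\<bar> \<le> int n" using pn by blast
    then show "label_seq p i = x i" using ps(2)[OF \<open>i \<in> D\<close>] by (simp add: label_seq_def)
  qed
  ultimately show ?thesis by blast
qed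




definition sh :: "(int \<Rightarrow> 'b) \<Rightarrow> int \<Rightarrow> int \<Rightarrow> 'b" where
  "sh y k = (\<lambda>i. y (i + k))"

definition wl :: "(int \<Rightarrow> 'b) \<Rightarrow> nat \<Rightarrow> 'b list" where
  "wl y n = map (\<lambda>k. y (int k - int n)) [0..<n]"

lemma cat_app: "cat (u @ v) z = cat u (cat v z)"
  by (auto simp: cat_def fun_eq_iff nth_append)

lemma sh_sh[simp]: "sh (sh y a) b = sh y (a + b)"
  by (simp add: sh_def fun_eq_iff ac_simps)

lemma sh_0[simp]: "sh y 0 = y" by (simp add: sh_def)

locale sof =
  fixes E :: "('v \<times> 'a \<times> 'v) set" and Y :: "(int \<Rightarrow> 'a) set"
  assumes finE: "finite E" and Ydef: "Y = label_seq ` edge_shift E"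
begin

lemma shiftY: "y \<in> Y \<Longrightarrow> sh y k \<in> Y"
proof -
  assume "y \<in> Y"
  then obtain p where p: "p \<in> edge_shift E" "y = label_seq p" using Ydef by auto
  have "sh p k \<in> edge_shift E" using p(1) by (auto simp: edge_shift_def sh_def algebra_simps)
  moreover have "sh y k = label_seq (sh p k)" using p(2) by (auto simp: sh_def label_seq_def)
  ultimately show ?thesis using Ydef by auto
qed

lemma clos:
  assumes H: "\<And>n::nat. \<exists>y'\<in>Y. \<forall>i\<in>D. \<bar>i\<bar> \<le> int n \<longrightarrow> y' i = x i"
  shows "\<exists>y\<in>Y. \<forall>i\<in>D. y i = x i"
proof -
  have "\<exists>p\<in>edge_shift E. \<forall>i\<in>D. label_seq p i = x i"
  proof (rule konig[OF finE])
    fix n :: nat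
    from H[of n] obtain y' where "y' \<in> Y" "\<forall>i\<in>D. \<bar>i\<bar> \<le> int n \<longrightarrow> y' i = x i" by blast
    then show "\<exists>p\<in>edge_shift E. \<forall>i\<in>D. \<bar>i\<bar> \<le> int n \<longrightarrow> label_seq p i = x i"
      using Ydef by auto
  qed
  then show ?thesis using Ydef by auto
qed

lemma Yplus_iff: "z \<in> Yplus Y \<longleftrightarrow> (\<exists>y\<in>Y. \<forall>n. y (int n) = z n)"
  unfolding Yplus_def right_part_def image_def by (auto simp: fun_eq_iff) metis

lemma cat_Yplus_iff: "cat w z \<in> Yplus Y \<longleftrightarrow>
   (\<exists>y\<in>Y. (\<forall>k<length w. y (int k - int (length w)) = w ! k) \<and> (\<forall>n. y (int n) = z n))"
proof
  assume "cat w z \<in> Yplus Y"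
  then obtain y0 where y0: "y0 \<in> Y" "\<And>m. y0 (int m) = cat w z m" unfolding Yplus_iff by blast
  have "sh y0 (int (length w)) \<in> Y" using shiftY y0(1) by blast
  moreover have "\<forall>k<length w. sh y0 (int (length w)) (int k - int (length w)) = w ! k"
    using y0(2) by (auto simp: sh_def cat_def)
  moreover have "\<forall>n. sh y0 (int (length w)) (int n) = z n"
    using y0(2)[of "n + length w" for n] by (auto simp: sh_def cat_def)
  ultimately show "\<exists>y\<in>Y. (\<forall>k<length w. y (int k - int (length w)) = w ! k) \<and> (\<forall>n. y (int n) = z n)"
    by blast
next
  assume "\<exists>y\<in>Y. (\<forall>k<length w. y (int k - int (length w)) = w ! k) \<and> (\<forall>n. y (int n) = z n)"
  then obtain y where y: "y \<in> Y" "\<And>k. k<length w \<Longrightarrow> y (int k - int (length w)) = w ! k"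
    "\<And>n. y (int n) = z n" by blast
  have "sh y (- int (length w)) \<in> Y" using shiftY y(1) by blast
  moreover have "sh y (- int (length w)) (int m) = cat w z m" for m
  proof (cases "m < length w")
    case True then show ?thesis using y(2)[of m] by (simp add: sh_def cat_def)
  next
    case False
    then have "int m - int (length w) = int (m - length w)" by simp
    then show ?thesis using y(3)[of "m - length w"] False by (simp add: sh_def cat_def)
  qed
  ultimately show "cat w z \<in> Yplus Y" unfolding Yplus_iff by blast
qed

lemma SUF: "cat u z \<in> Yplus Y \<Longrightarrow> z \<in> Yplus Y"
  using cat_Yplus_iff[of u z] Yplus_iff[of z] by blast

lemma Fw_simp: "Fw Y u = {z. cat u z \<in> Yplus Y}"
  using SUF by (auto simp: Fw_def)

lemma Fy_simp: "Fy Y y = {z. glue y z \<in> Y}"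
proof -
  have "glue y z \<in> Y \<Longrightarrow> z \<in> Yplus Y" for z
    unfolding Yplus_iff by (rule bexI[of _ "glue y z"]) (auto simp: glue_def)
  then show ?thesis by (auto simp: Fy_def)
qed

lemma PW: "cat u z \<in> Yplus Y \<Longrightarrow> u \<in> words Y"
proof -
  assume "cat u z \<in> Yplus Y"
  then obtain y where "y \<in> Y" "\<And>k. k<length u \<Longrightarrow> y (int k - int (length u)) = u ! k"
    unfolding cat_Yplus_iff by blast
  then show ?thesis unfolding words_def occurs_def
    by (intro CollectI bexI[of _ y] exI[of _ "- int (length u)"]) (auto simp: add.commute)
qed

lemma WE: "u \<in> words Y \<Longrightarrow> \<exists>z. cat u z \<in> Yplus Y"
proof -
  assume "u \<in> words Y"
  then obtain y i where y: "y \<in> Y" "\<And>k. k < length u \<Longrightarrow> y (i + int k) = u ! k"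
    unfolding words_def occurs_def by blast
  define y' where "y' = sh y (i + int (length u))"
  have "y' \<in> Y" using shiftY y(1) y'_def by blast
  moreover have "\<forall>k<length u. y' (int k - int (length u)) = u ! k"
    using y(2) by (simp add: y'_def sh_def add.commute)
  ultimately have "cat u (\<lambda>n. y' (int n)) \<in> Yplus Y" unfolding cat_Yplus_iff by blast
  then show ?thesis by blast
qed

lemma RR: "Fw Y (u @ [a]) = {z. cat [a] z \<in> Fw Y u}"
  unfolding Fw_simp cat_app using SUF by auto

lemma Fw_nonempty_word: "Fw Y u \<noteq> {} \<Longrightarrow> u \<in> words Y"
  unfolding Fw_simp using PW by auto

lemma word_Fw_nonempty: "u \<in> words Y \<Longrightarrow> Fw Y u \<noteq> {}"
  unfolding Fw_simp using WE by auto

end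



context sof begin

definition T where "T w = {fst (p 0) | p. p \<in> edge_shift E \<and>
    (\<forall>k<length w. label_seq p (int k - int (length w)) = w!k)}"
definition fut where "fut v = {(\<lambda>n. label_seq p (int n)) | p. p \<in> edge_shift E \<and> fst (p 0) = v}"

lemma Fw_T: "Fw Y w = \<Union>(fut ` T w)"
proof (intro equalityI subsetI)
  fix z assume "z \<in> Fw Y w"
  then obtain y where y: "y \<in> Y" "\<forall>k<length w. y (int k - int (length w)) = w ! k" "\<forall>n. y (int n) = z n"
    unfolding Fw_simp cat_Yplus_iff by blast
  then obtain p where p: "p \<in> edge_shift E" "y = label_seq p" using Ydef by auto
  have "fst (p 0) \<in> T w" unfolding T_def using p y(2) by blast
  moreover have "z \<in> fut (fst (p 0))" unfolding fut_def using p y(3) by (auto simp: fun_eq_iff) metis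
  ultimately show "z \<in> \<Union>(fut ` T w)" by blast
next
  fix z assume "z \<in> \<Union>(fut ` T w)"
  then obtain p1 p2 where p1: "p1 \<in> edge_shift E" "\<forall>k<length w. label_seq p1 (int k - int (length w)) = w!k"
    and p2: "p2 \<in> edge_shift E" "fst (p2 0) = fst (p1 0)" "z = (\<lambda>n. label_seq p2 (int n))"
    unfolding T_def fut_def by blast
  define p where "p = (\<lambda>i. if i < 0 then p1 i else p2 i)"
  have "p \<in> edge_shift E"
    unfolding edge_shift_def
  proof (safe)
    fix i
    show "p i \<in> E" using p1(1) p2(1) by (auto simp: p_def edge_shift_def)
    show "snd (snd (p i)) = fst (p (i + 1))"
    proof (cases "i < -1")
      case True then show ?thesis using p1(1) by (auto simp: p_def edge_shift_def)
    next
      case False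
      show ?thesis
      proof (cases "i = -1")
        case True then show ?thesis using p1(1) p2(2) by (auto simp: p_def edge_shift_def)
      next
        case False
        then have "i \<ge> 0" using \<open>\<not> i < -1\<close> by simp
        then show ?thesis using p2(1) by (auto simp: p_def edge_shift_def)
      qed
    qed
  qed
  then have "label_seq p \<in> Y" using Ydef by auto
  moreover have "\<forall>k<length w. label_seq p (int k - int (length w)) = w ! k"
    using p1(2) by (auto simp: p_def label_seq_def)
  moreover have "\<forall>n. label_seq p (int n) = z n" using p2(3) by (auto simp: p_def label_seq_def)
  ultimately show "z \<in> Fw Y w" unfolding Fw_simp cat_Yplus_iff by blast
qed

lemma fin_Fw: "finite (range (Fw Y))"
proof (rule finite_subset)
  show "range (Fw Y) \<subseteq> (\<lambda>S. \<Union>(fut ` S)) ` Pow (fst ` E)"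
  proof
    fix A assume "A \<in> range (Fw Y)"
    then obtain w where "A = Fw Y w" by blast
    moreover have "T w \<subseteq> fst ` E" unfolding T_def edge_shift_def by blast
    ultimately show "A \<in> (\<lambda>S. \<Union>(fut ` S)) ` Pow (fst ` E)" using Fw_T by blast
  qed
  show "finite ((\<lambda>S. \<Union>(fut ` S)) ` Pow (fst ` E))" using finE by simp
qed

lemma cat_wl: "cat (wl y n) z \<in> Yplus Y \<longleftrightarrow>
  (\<exists>y'\<in>Y. (\<forall>i. - int n \<le> i \<and> i < 0 \<longrightarrow> y' i = y i) \<and> (\<forall>m. y' (int m) = z m))"
proof -
  have "(\<forall>k<length (wl y n). y' (int k - int (length (wl y n))) = wl y n ! k) \<longleftrightarrow>
        (\<forall>i. - int n \<le> i \<and> i < 0 \<longrightarrow> y' i = y i)" for y'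
  proof
    assume a: "\<forall>k<length (wl y n). y' (int k - int (length (wl y n))) = wl y n ! k"
    show "\<forall>i. - int n \<le> i \<and> i < 0 \<longrightarrow> y' i = y i"
    proof (intro allI impI)
      fix i assume i: "- int n \<le> i \<and> i < 0"
      define k where "k = nat (i + int n)"
      have "k < n" "int k - int n = i" using i by (auto simp: k_def)
      then show "y' i = y i" using a by (auto simp: wl_def)
    qed
  next
    assume a: "\<forall>i. - int n \<le> i \<and> i < 0 \<longrightarrow> y' i = y i"
    show "\<forall>k<length (wl y n). y' (int k - int (length (wl y n))) = wl y n ! k"
      using a by (auto simp: wl_def)
  qed
  then show ?thesis unfolding cat_Yplus_iff by simp
qed

lemma Fy_sub: "Fy Y y \<subseteq> Fw Y (wl y n)"
proof
  fix z assume "z \<in> Fy Y y"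
  then have "glue y z \<in> Y" by (simp add: Fy_simp)
  then show "z \<in> Fw Y (wl y n)" unfolding Fw_simp cat_wl
    by (intro CollectI bexI[of _ "glue y z"]) (auto simp: glue_def)
qed

lemma Fy_Inter: "(\<And>n. z \<in> Fw Y (wl y n)) \<Longrightarrow> z \<in> Fy Y y"
proof -
  assume a: "\<And>n. z \<in> Fw Y (wl y n)"
  have "\<exists>y''\<in>Y. \<forall>i\<in>UNIV. y'' i = glue y z i"
  proof (rule clos)
    fix n
    from a[of n] obtain y' where y': "y' \<in> Y" "\<forall>i. - int n \<le> i \<and> i < 0 \<longrightarrow> y' i = y i"
      "\<forall>m. y' (int m) = z m" unfolding Fw_simp cat_wl by blast
    have "\<forall>i\<in>UNIV. \<bar>i\<bar> \<le> int n \<longrightarrow> y' i = glue y z i"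
    proof (intro ballI impI)
      fix i :: int assume "\<bar>i\<bar> \<le> int n"
      then show "y' i = glue y z i" using y'(2) y'(3)[rule_format, of "nat i"]
        by (cases "i < 0") (auto simp: glue_def)
    qed
    then show "\<exists>y'\<in>Y. \<forall>i\<in>UNIV. \<bar>i\<bar> \<le> int n \<longrightarrow> y' i = glue y z i" using y'(1) by blast
  qed
  then obtain y'' where "y'' \<in> Y" "\<And>i. y'' i = glue y z i" by blast
  moreover then have "y'' = glue y z" by (intro ext) simp
  ultimately have "glue y z \<in> Y" by simp
  then show ?thesis by (simp add: Fy_simp)
qed

lemma anti: "Fw Y (wl y (Suc n)) \<subseteq> Fw Y (wl y n)"
proof
  fix z assume "z \<in> Fw Y (wl y (Suc n))"
  then obtain y' where y': "y' \<in> Y" "\<forall>i. - int (Suc n) \<le> i \<and> i < 0 \<longrightarrow> y' i = y i"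
      "\<forall>m. y' (int m) = z m" unfolding Fw_simp cat_wl by blast
  have "\<forall>i. - int n \<le> i \<and> i < 0 \<longrightarrow> y' i = y i" using y'(2) by simp
  then show "z \<in> Fw Y (wl y n)" unfolding Fw_simp cat_wl using y'(1,3) by blast
qed

lemma Stab: "\<exists>N. \<forall>n\<ge>N. Fy Y y = Fw Y (wl y n)"
proof -
  define f where "f = (\<lambda>n. Fw Y (wl y n))"
  have "range f \<subseteq> range (Fw Y)" unfolding f_def by auto
  then have finf: "finite (range f)" using fin_Fw finite_subset by blast
  obtain b where b: "b \<in> range f" "\<forall>x\<in>range f. x \<le> b \<longrightarrow> b = x"
    using finite_has_minimal[OF finf] by blast
  then obtain N where N: "b = f N" by blast
  have suc: "f (Suc k) \<subseteq> f k" for k using anti f_def by simp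
  have mono: "m \<le> n \<Longrightarrow> f n \<subseteq> f m" for m n
    using lift_Suc_antimono_le[of f, OF suc] by simp
  have eq: "n \<ge> N \<Longrightarrow> f n = f N" for n
  proof -
    assume "n \<ge> N"
    then have "f n \<le> b" using mono[of N n] N by simp
    moreover have "f n \<in> range f" by simp
    ultimately show "f n = f N" using b(2) N by metis
  qed
  have "Fy Y y = f N"
  proof
    show "Fy Y y \<subseteq> f N" unfolding f_def by (rule Fy_sub)
    show "f N \<subseteq> Fy Y y"
    proof
      fix z assume z: "z \<in> f N"
      have "z \<in> Fw Y (wl y n)" for n
      proof (cases "n \<le> N")
        case True then show ?thesis using z mono[of n N] unfolding f_def by blast
      next
        case False then show ?thesis using z eq[of n] unfolding f_def by simp
      qed
      then show "z \<in> Fy Y y" by (rule Fy_Inter)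
    qed
  qed
  then show ?thesis using eq unfolding f_def by metis
qed

lemma wl_words: "y \<in> Y \<Longrightarrow> wl y n \<in> words Y"
  unfolding words_def occurs_def
  by (intro CollectI bexI[of _ y] exI[of _ "- int n"]) (auto simp: wl_def add.commute)

lemma wl_snoc: "wl (sh y i) n @ [y i] = wl (sh y (i + 1)) (Suc n)"
proof (rule nth_equalityI)
  show "length (wl (sh y i) n @ [y i]) = length (wl (sh y (i + 1)) (Suc n))" by (simp add: wl_def)
  fix k assume "k < length (wl (sh y i) n @ [y i])"
  then have k: "k < Suc n" by (simp add: wl_def)
  show "(wl (sh y i) n @ [y i]) ! k = wl (sh y (i + 1)) (Suc n) ! k"
  proof (cases "k < n")
    case True
    have "int k - int (Suc n) + (i + 1) = int k - int n + i" by simp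
    then show ?thesis using True k by (simp add: wl_def sh_def nth_append algebra_simps del: upt_Suc)
  next
    case False
    then have "k = n" using k by simp
    then show ?thesis by (simp add: wl_def sh_def nth_append del: upt_Suc)
  qed
qed

end



context sof begin

lemma G_src:
  assumes "(u, a, v) \<in> fsg_edges Y"
  shows "u \<in> fsg_vertices Y" "u \<noteq> {}" "v = {z. cat [a] z \<in> u}"
proof -
  from assms obtain w where w: "u = Fw Y w" "v = Fw Y (w @ [a])" "w @ [a] \<in> words Y"
    unfolding fsg_edges_def by blast
  from WE[OF w(3)] obtain z where "cat (w @ [a]) z \<in> Yplus Y" by blast
  then have z: "cat w (cat [a] z) \<in> Yplus Y" by (simp add: cat_app)
  then show "u \<in> fsg_vertices Y" using PW w(1) unfolding fsg_vertices_def by blast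
  show "u \<noteq> {}" using z w(1) unfolding Fw_simp by blast
  show "v = {z. cat [a] z \<in> u}" using w RR by simp
qed

lemma FH:
  assumes "v \<in> fsg_vertices Y"
  shows "fH (fsg_edges Y) v = v"
proof -
  from assms obtain w where w: "v = Fw Y w" "w \<in> words Y" unfolding fsg_vertices_def by blast
  show ?thesis
  proof (intro equalityI subsetI)
    fix x assume "x \<in> fH (fsg_edges Y) v"
    then obtain p where p: "rpath (fsg_edges Y) p" "fst (p 0) = v" "x = (\<lambda>n. fst (snd (p n)))"
      unfolding fH_def by blast
    have pe: "p n \<in> fsg_edges Y" "snd (snd (p n)) = fst (p (Suc n))" for n
      using p(1) by (auto simp: rpath_def)
    have st: "fst (p n) = Fw Y (w @ map x [0..<n])" for n
    proof (induction n)
      case 0 then show ?case using p(2) w(1) by simp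
    next
      case (Suc n)
      obtain u a v' where e: "p n = (u, a, v')" by (cases "p n")
      have a: "a = x n" using e p(3) by simp
      have "fst (p (Suc n)) = v'" using pe(2)[of n] e by simp
      also have "\<dots> = {z. cat [a] z \<in> u}" using G_src(3) pe(1)[of n] e by simp
      also have "\<dots> = Fw Y ((w @ map x [0..<n]) @ [a])" using RR[of "w @ map x [0..<n]" a] Suc e by simp
      finally show ?case using a by simp
    qed
    have ne: "\<exists>z. cat (w @ map x [0..<n]) z \<in> Yplus Y" for n
    proof -
      obtain u a v' where e: "p n = (u, a, v')" by (cases "p n")
      have "u \<noteq> {}" using G_src(2) pe(1)[of n] e by simp
      moreover have "u = Fw Y (w @ map x [0..<n])" using st[of n] e by simp
      ultimately show ?thesis unfolding Fw_simp by blast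
    qed
    define t where "t = (\<lambda>i::int. if i < 0 then w ! nat (i + int (length w)) else x (nat i))"
    have "\<exists>y\<in>Y. \<forall>i\<in>{- int (length w)..}. y i = t i"
    proof (rule clos)
      fix n
      obtain z where "cat (w @ map x [0..<Suc n]) z \<in> Yplus Y" using ne by blast
      then have "cat w (cat (map x [0..<Suc n]) z) \<in> Yplus Y" by (simp add: cat_app)
      then obtain y' where y': "y' \<in> Y" "\<forall>k<length w. y' (int k - int (length w)) = w ! k"
        "\<forall>m. y' (int m) = cat (map x [0..<Suc n]) z m" unfolding cat_Yplus_iff by blast
      have "\<forall>i\<in>{- int (length w)..}. \<bar>i\<bar> \<le> int n \<longrightarrow> y' i = t i"
      proof (intro ballI impI)
        fix i assume i: "i \<in> {- int (length w)..}" "\<bar>i\<bar> \<le> int n"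
        show "y' i = t i"
        proof (cases "i < 0")
          case True
          define k where "k = nat (i + int (length w))"
          have "k < length w" "int k - int (length w) = i" using True i by (auto simp: k_def)
          then show ?thesis using y'(2) True by (auto simp: t_def k_def)
        next
          case False
          then have "nat i < Suc n" using i by simp
          then show ?thesis using y'(3)[rule_format, of "nat i"] False
            by (simp add: t_def cat_def del: upt_Suc)
        qed
      qed
      then show "\<exists>y'\<in>Y. \<forall>i\<in>{- int (length w)..}. \<bar>i\<bar> \<le> int n \<longrightarrow> y' i = t i" using y'(1) by blast
    qed
    then obtain y where y: "y \<in> Y" "\<And>i. i \<ge> - int (length w) \<Longrightarrow> y i = t i" by auto
    have "\<forall>k<length w. y (int k - int (length w)) = w ! k" using y(2) by (auto simp: t_def)
    moreover have "\<forall>m. y (int m) = x m" using y(2) by (auto simp: t_def)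
    ultimately have "cat w x \<in> Yplus Y" unfolding cat_Yplus_iff using y(1) by blast
    then show "x \<in> v" using w(1) unfolding Fw_simp by simp
  next
    fix x assume x: "x \<in> v"
    define p where "p = (\<lambda>n. (Fw Y (w @ map x [0..<n]), x n, Fw Y (w @ map x [0..<Suc n])))"
    have "p n \<in> fsg_edges Y" for n
    proof -
      have "cat (w @ map x [0..<Suc n]) (\<lambda>k. x (k + Suc n)) = cat w x"
        by (auto simp: cat_def fun_eq_iff nth_append simp del: upt_Suc) (metis Suc_diff_Suc not_less_eq not_less_iff_gr_or_eq trans_less_add1)
      moreover have "cat w x \<in> Yplus Y" using x w(1) unfolding Fw_simp by simp
      ultimately have "w @ map x [0..<Suc n] \<in> words Y" using PW by metis
      then show ?thesis unfolding fsg_edges_def p_def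
        by (intro CollectI exI[of _ "w @ map x [0..<n]"] exI[of _ "x n"]) simp
    qed
    then have "rpath (fsg_edges Y) p" by (simp add: rpath_def p_def)
    moreover have "fst (p 0) = v" using w by (simp add: p_def)
    moreover have "x = (\<lambda>n. fst (snd (p n)))" by (simp add: p_def)
    ultimately show "x \<in> fH (fsg_edges Y) v" unfolding fH_def by blast
  qed
qed

end



context sof begin

lemma PL:
  assumes z: "z \<in> edge_shift (fsg_edges Y)"
  shows "label_seq z \<in> Y"
proof -
  have "\<exists>y\<in>Y. \<forall>i\<in>UNIV. y i = label_seq z i"
  proof (rule clos)
    fix n :: nat
    obtain u a v' where e: "z (- int n) = (u, a, v')" by (cases "z (- int n)")
    have ze: "z i \<in> fsg_edges Y" "snd (snd (z i)) = fst (z (i + 1))" for i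
      using z by (auto simp: edge_shift_def)
    have uV: "u \<in> fsg_vertices Y" using G_src(1) ze(1)[of "- int n"] e by simp
    define q where "q = (\<lambda>k::nat. z (int k - int n))"
    have "rpath (fsg_edges Y) q" unfolding rpath_def q_def
    proof
      fix k
      show "z (int k - int n) \<in> fsg_edges Y \<and> snd (snd (z (int k - int n))) = fst (z (int (Suc k) - int n))"
        using ze[of "int k - int n"] by (simp add: algebra_simps)
    qed
    moreover have "fst (q 0) = u" using e by (simp add: q_def)
    ultimately have "(\<lambda>k. fst (snd (q k))) \<in> fH (fsg_edges Y) u" unfolding fH_def by blast
    then have "(\<lambda>k. fst (snd (q k))) \<in> u" using FH[OF uV] by simp
    moreover have "u \<subseteq> Yplus Y" using uV unfolding fsg_vertices_def Fw_def by auto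
    ultimately have "(\<lambda>k. fst (snd (q k))) \<in> Yplus Y" by blast
    then obtain y'' where y'': "y'' \<in> Y" "\<And>m. y'' (int m) = fst (snd (q m))"
      unfolding Yplus_iff by blast
    have "sh y'' (int n) \<in> Y" using shiftY y''(1) by blast
    moreover have "\<forall>i\<in>UNIV. \<bar>i\<bar> \<le> int n \<longrightarrow> sh y'' (int n) i = label_seq z i"
    proof (intro ballI impI)
      fix i :: int assume "\<bar>i\<bar> \<le> int n"
      then have "i + int n = int (nat (i + int n))" by simp
      then show "sh y'' (int n) i = label_seq z i" using y''(2)[of "nat (i + int n)"]
        by (simp add: sh_def q_def label_seq_def)
    qed
    ultimately show "\<exists>y'\<in>Y. \<forall>i\<in>UNIV. \<bar>i\<bar> \<le> int n \<longrightarrow> y' i = label_seq z i" by blast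
  qed
  then obtain y where "y \<in> Y" "\<And>i. y i = label_seq z i" by blast
  moreover then have "y = label_seq z" by (intro ext) simp
  ultimately show ?thesis by simp
qed

lemma Fy_V: "y \<in> Y \<Longrightarrow> Fy Y y \<in> fsg_vertices Y"
  using Stab[of y] wl_words[of y] unfolding fsg_vertices_def by blast

lemma regV: "reg_vertices Y (fsg_vertices Y) (fsg_edges Y) = Fy Y ` Y"
proof (intro equalityI subsetI)
  fix v assume "v \<in> reg_vertices Y (fsg_vertices Y) (fsg_edges Y)"
  then obtain z where v: "v \<in> fsg_vertices Y" "z \<in> edge_shift (fsg_edges Y)"
    "fH (fsg_edges Y) v = Fy Y (label_seq z)"
    unfolding reg_vertices_def regular_def by blast
  then have "v = Fy Y (label_seq z)" using FH by simp
  then show "v \<in> Fy Y ` Y" using PL[OF v(2)] by blast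
next
  fix v assume "v \<in> Fy Y ` Y"
  then obtain y where y: "y \<in> Y" "v = Fy Y y" by blast
  define z where "z = (\<lambda>i. (Fy Y (sh y i), y i, Fy Y (sh y (i + 1))))"
  have "z i \<in> fsg_edges Y" for i
  proof -
    obtain N1 where N1: "\<forall>n\<ge>N1. Fy Y (sh y i) = Fw Y (wl (sh y i) n)" using Stab by blast
    obtain N2 where N2: "\<forall>n\<ge>N2. Fy Y (sh y (i+1)) = Fw Y (wl (sh y (i+1)) n)" using Stab by blast
    define n where "n = N1 + N2"
    have a: "Fy Y (sh y i) = Fw Y (wl (sh y i) n)" using N1 n_def by simp
    have b: "Fy Y (sh y (i+1)) = Fw Y (wl (sh y i) n @ [y i])"
      using N2[rule_format, of "Suc n"] wl_snoc[of y i n] n_def by simp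
    have c: "wl (sh y i) n @ [y i] \<in> words Y" using wl_snoc[of y i n] wl_words shiftY[OF y(1)] by simp
    show ?thesis unfolding z_def fsg_edges_def using a b c by blast
  qed
  then have zE: "z \<in> edge_shift (fsg_edges Y)" by (simp add: edge_shift_def z_def)
  have ly: "label_seq z = y" by (simp add: label_seq_def z_def)
  have "snd (snd (z (-1))) = v" using y(2) by (simp add: z_def)
  moreover have "fH (fsg_edges Y) v = Fy Y (label_seq z)" using FH[OF Fy_V[OF y(1)]] y(2) ly by simp
  moreover have "v \<in> fsg_vertices Y" using Fy_V y by simp
  ultimately show "v \<in> reg_vertices Y (fsg_vertices Y) (fsg_edges Y)"
    unfolding reg_vertices_def regular_def using zE by blast
qed

lemma glue_rp: "y \<in> Y \<Longrightarrow> right_part y \<in> Fy Y y"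
proof -
  assume "y \<in> Y"
  moreover have "glue y (right_part y) = y" by (auto simp: glue_def right_part_def fun_eq_iff)
  ultimately show ?thesis by (simp add: Fy_simp)
qed

lemma regE: "fc_edges Y = reg_edges Y (fsg_vertices Y) (fsg_edges Y)"
proof (intro equalityI subsetI)
  fix e assume "e \<in> fc_edges Y"
  then obtain y z a where e: "e = (Fy Y y, a, Fy Y z)" "y \<in> Y" "z \<in> Y"
    "Fy Y z = {w. cat [a] w \<in> Fy Y y}" unfolding fc_edges_def by blast
  obtain N where "\<forall>n\<ge>N. Fy Y y = Fw Y (wl y n)" using Stab by blast
  then have u: "Fy Y y = Fw Y (wl y N)" by simp
  have fz: "Fw Y (wl y N @ [a]) = Fy Y z" using RR e(4) u by simp
  have "right_part z \<in> Fw Y (wl y N @ [a])" using fz glue_rp[OF e(3)] by simp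
  then have "wl y N @ [a] \<in> words Y" using Fw_nonempty_word by blast
  then have "e \<in> fsg_edges Y" unfolding fsg_edges_def using e(1) u fz by auto
  then show "e \<in> reg_edges Y (fsg_vertices Y) (fsg_edges Y)"
    unfolding reg_edges_def using regV e(1,2) by auto
next
  fix e assume "e \<in> reg_edges Y (fsg_vertices Y) (fsg_edges Y)"
  then have eG: "e \<in> fsg_edges Y" and "fst e \<in> Fy Y ` Y" unfolding reg_edges_def using regV by auto
  then obtain y where y: "y \<in> Y" "fst e = Fy Y y" by blast
  from eG obtain u a where e: "e = (Fw Y u, a, Fw Y (u @ [a]))" "u @ [a] \<in> words Y"
    unfolding fsg_edges_def by blast
  have uy: "Fw Y u = Fy Y y" using y e by simp
  from WE[OF e(2)] obtain w0 where "cat (u @ [a]) w0 \<in> Yplus Y" by blast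
  then have "cat u (cat [a] w0) \<in> Yplus Y" by (simp add: cat_app)
  then have "cat [a] w0 \<in> Fy Y y" using uy unfolding Fw_simp by blast
  then have g0: "glue y (cat [a] w0) \<in> Y" by (simp add: Fy_simp)
  define z where "z = sh (glue y (cat [a] w0)) 1"
  have zY: "z \<in> Y" using shiftY[OF g0] z_def by simp
  have gl: "glue z w = sh (glue y (cat [a] w)) 1" for w
    by (auto simp: z_def glue_def sh_def cat_def fun_eq_iff nat_add_distrib)
  have "glue z w \<in> Y \<longleftrightarrow> glue y (cat [a] w) \<in> Y" for w
  proof
    assume "glue z w \<in> Y"
    then have "sh (glue z w) (-1) \<in> Y" by (rule shiftY)
    then show "glue y (cat [a] w) \<in> Y" using gl by simp
  next
    assume "glue y (cat [a] w) \<in> Y"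
    then show "glue z w \<in> Y" using gl shiftY by simp
  qed
  then have "Fy Y z = {w. cat [a] w \<in> Fy Y y}" by (simp add: Fy_simp)
  moreover have "Fw Y (u @ [a]) = {w. cat [a] w \<in> Fy Y y}" using RR uy by simp
  ultimately show "e \<in> fc_edges Y" unfolding fc_edges_def using e(1) uy y(1) zY by auto
qed

end

theorem proposition3p16:
  fixes Y :: "(int \<Rightarrow> 'a::finite) set"
  assumes "sofic Y"
  shows "lg_iso (fc_vertices Y) (fc_edges Y)
           (reg_vertices Y (fsg_vertices Y) (fsg_edges Y))
           (reg_edges Y (fsg_vertices Y) (fsg_edges Y))"
proof -
  from assms obtain E :: "(nat \<times> 'a \<times> nat) set" where E: "finite E" "Y = label_seq ` edge_shift E"
    unfolding sofic_def by blast
  interpret sof E Y using E by unfold_locales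
  have V: "reg_vertices Y (fsg_vertices Y) (fsg_edges Y) = fc_vertices Y"
    using regV by (simp add: fc_vertices_def)
  have Ed: "reg_edges Y (fsg_vertices Y) (fsg_edges Y) = fc_edges Y" using regE by simp
  have sub: "fc_edges Y \<subseteq> fc_vertices Y \<times> UNIV \<times> fc_vertices Y"
    unfolding fc_edges_def fc_vertices_def by auto
  have idf: "(\<lambda>(u, a, v). (id u, a, id v)) = (id :: ((nat \<Rightarrow> 'a) set \<times> 'a \<times> (nat \<Rightarrow> 'a) set) \<Rightarrow> _)"
    by (auto simp: fun_eq_iff)
  show ?thesis unfolding lg_iso_def V Ed
    using sub by (intro conjI exI[of _ id]) (auto simp: idf)
qed


end
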